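(* A mechanism $\varphi$ is strategyproof if and only if it is separation monotonic, separation upper invariant, and separation lower invariant.
   Context: Let $M$ be a finite set of $m$ alternatives. A preference order is a weak order $R$ on $M$ (with strict part $P$ and indifference $I$), represented as $M_1 ~P~ \ldots ~P~ M_K$, where $(M_k)_{1\le k\le K}$ is a partition of $M$ such that the agent is indifferent between any two alternatives in the same $M_k$ and strictly prefers every alternative of $M_k$ to every alternative of $M_{k+1}$. Let $\mathcal{R}$ be the set of all preference orders. A mechanism is a map $\varphi:\mathcal{R}\to\Delta(M)$ (lotteries over $M$); for $A\subseteq M$ write $\varphi_A(R)=\sum_{a\in A}\varphi_a(R)$. A lottery $x$ first order-stochastically dominates $y$ at $R$ if $\sum_{j: j R a} x_j \ge \sum_{j: j R a} y_j$ for all $a\in M$. $\varphi$ is strategyproof if for all $(R,R')\in\mathcal{R}^2$, $\varphi(R)$ first order-stochastically dominates $\varphi(R')$ at $R$. A separation is a pair $(R,R')$ such that, for some $\kappa\in\{1,\ldots,K\}$, $R$ is $M_1 P \ldots P M_\kappa P \ldots P M_K$ and $R'$ is $M_1 P' \ldots P' M_{\kappa-1} P' M^1_\kappa P' M^2_\kappa P' M_{\kappa+1} P' \ldots P' M_K$, where $M^1_\kappa \dot\cup M^2_\kappa = M_\kappa$ is a disjoint partition. The axioms: $\varphi$ is separation responsive if for all separations $\varphi_{M^1_\kappa}(R')\ge\varphi_{M^1_\kappa}(R)$ and $\varphi_{M^2_\kappa}(R')\le\varphi_{M^2_\kappa}(R)$; separation direct if for all separations with $\varphi_{M_k}(R)\ne\varphi_{M_k}(R')$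 for some $k$, we have $\varphi_{M^1_\kappa}(R')\ne\varphi_{M^1_\kappa}(R)$ and $\varphi_{M^2_\kappa}(R')\ne\varphi_{M^2_\kappa}(R)$; separation monotonic if both separation responsive and separation direct; separation upper invariant if for all separations $\varphi_{M_k}(R)=\varphi_{M_k}(R')$ for all $k\in\{1,\ldots,\kappa-1\}$; separation lower invariant if for all separations $\varphi_{M_k}(R)=\varphi_{M_k}(R')$ for all $k\in\{\kappa+1,\ldots,K\}$. *)

theory Defs
  imports Complex_Main
begin

text \<open>Alternatives: a finite type 'a, so the set of alternatives M is UNIV.
  A preference order is a weak order (reflexive, transitive, total relation) on M.\<close>

definition pref_order :: "('a \<times> 'a) set \<Rightarrow> bool" where
  "pref_order R \<longleftrightarrow> refl R \<and> trans R \<and> total R"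

text \<open>Ms is the block representation M_1 P ... P M_K of R (0-indexed list):
  an ordered partition of M into nonempty blocks, with a R b iff the block of a
  is not after the block of b.\<close>

definition represents :: "('a \<times> 'a) set \<Rightarrow> 'a set list \<Rightarrow> bool" where
  "represents R Ms \<longleftrightarrow>
     (\<forall>X\<in>set Ms. X \<noteq> {}) \<and>
     (\<forall>i<length Ms. \<forall>j<length Ms. i \<noteq> j \<longrightarrow> Ms ! i \<inter> Ms ! j = {}) \<and>
     \<Union>(set Ms) = UNIV \<and>
     (\<forall>a b. (a, b) \<in> R \<longleftrightarrow>
        (\<exists>i<length Ms. \<exists>j<length Ms. i \<le> j \<and> a \<in> Ms ! i \<and> b \<in> Ms ! j))"

definition lottery :: "('a::finite \<Rightarrow> real) \<Rightarrow> bool" where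
  "lottery x \<longleftrightarrow> (\<forall>a. 0 \<le> x a) \<and> (\<Sum>a\<in>UNIV. x a) = 1"

definition mechanism :: "(('a::finite \<times> 'a) set \<Rightarrow> 'a \<Rightarrow> real) \<Rightarrow> bool" where
  "mechanism \<phi> \<longleftrightarrow> (\<forall>R. pref_order R \<longrightarrow> lottery (\<phi> R))"

definition setprob :: "('a \<Rightarrow> real) \<Rightarrow> 'a set \<Rightarrow> real" where
  "setprob x A = (\<Sum>a\<in>A. x a)"

definition fosd :: "('a::finite \<times> 'a) set \<Rightarrow> ('a \<Rightarrow> real) \<Rightarrow> ('a \<Rightarrow> real) \<Rightarrow> bool" where
  "fosd R x y \<longleftrightarrow> (\<forall>a. setprob x {j. (j, a) \<in> R} \<ge> setprob y {j. (j, a) \<in> R})"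

definition strategyproof :: "(('a::finite \<times> 'a) set \<Rightarrow> 'a \<Rightarrow> real) \<Rightarrow> bool" where
  "strategyproof \<phi> \<longleftrightarrow>
     (\<forall>R R'. pref_order R \<and> pref_order R' \<longrightarrow> fosd R (\<phi> R) (\<phi> R'))"

text \<open>(R, R') is a separation with data Ms (blocks of R), k (0-indexed position of
  the split block M_kappa), and the split M_kappa = A \<union> B (A = M^1, B = M^2).\<close>

definition separation ::
  "('a \<times> 'a) set \<Rightarrow> ('a \<times> 'a) set \<Rightarrow> 'a set list \<Rightarrow> nat \<Rightarrow> 'a set \<Rightarrow> 'a set \<Rightarrow> bool" where
  "separation R R' Ms k A B \<longleftrightarrow>
     pref_order R \<and> pref_order R' \<and>
     represents R Ms \<and> k < length Ms \<and>
     A \<union> B = Ms ! k \<and> A \<inter> B = {} \<and> A \<noteq> {} \<and> B \<noteq> {} \<and>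
     represents R' (take k Ms @ [A, B] @ drop (Suc k) Ms)"

definition sep_responsive :: "(('a::finite \<times> 'a) set \<Rightarrow> 'a \<Rightarrow> real) \<Rightarrow> bool" where
  "sep_responsive \<phi> \<longleftrightarrow>
     (\<forall>R R' Ms k A B. separation R R' Ms k A B \<longrightarrow>
        setprob (\<phi> R') A \<ge> setprob (\<phi> R) A \<and> setprob (\<phi> R') B \<le> setprob (\<phi> R) B)"

definition sep_direct :: "(('a::finite \<times> 'a) set \<Rightarrow> 'a \<Rightarrow> real) \<Rightarrow> bool" where
  "sep_direct \<phi> \<longleftrightarrow>
     (\<forall>R R' Ms k A B. separation R R' Ms k A B \<longrightarrow>
        (\<exists>i<length Ms. setprob (\<phi> R) (Ms ! i) \<noteq> setprob (\<phi> R') (Ms ! i)) \<longrightarrow>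
        setprob (\<phi> R') A \<noteq> setprob (\<phi> R) A \<and> setprob (\<phi> R') B \<noteq> setprob (\<phi> R) B)"

definition sep_monotonic :: "(('a::finite \<times> 'a) set \<Rightarrow> 'a \<Rightarrow> real) \<Rightarrow> bool" where
  "sep_monotonic \<phi> \<longleftrightarrow> sep_responsive \<phi> \<and> sep_direct \<phi>"

definition sep_upper_invariant :: "(('a::finite \<times> 'a) set \<Rightarrow> 'a \<Rightarrow> real) \<Rightarrow> bool" where
  "sep_upper_invariant \<phi> \<longleftrightarrow>
     (\<forall>R R' Ms k A B. separation R R' Ms k A B \<longrightarrow>
        (\<forall>i<k. setprob (\<phi> R) (Ms ! i) = setprob (\<phi> R') (Ms ! i)))"

definition sep_lower_invariant :: "(('a::finite \<times> 'a) set \<Rightarrow> 'a \<Rightarrow> real) \<Rightarrow> bool" where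
  "sep_lower_invariant \<phi> \<longleftrightarrow>
     (\<forall>R R' Ms k A B. separation R R' Ms k A B \<longrightarrow>
        (\<forall>i. k < i \<and> i < length Ms \<longrightarrow> setprob (\<phi> R) (Ms ! i) = setprob (\<phi> R') (Ms ! i)))"

end

theory Submission imports Defs begin

definition rel :: "'a set list \<Rightarrow> ('a \<times> 'a) set" where
  "rel Ms = {(a,b). \<exists>i<length Ms. \<exists>j<length Ms. i \<le> j \<and> a \<in> Ms!i \<and> b \<in> Ms!j}"

definition opl :: "'a set list \<Rightarrow> bool" where
  "opl Ms \<longleftrightarrow> (\<forall>X\<in>set Ms. X \<noteq> {}) \<and> sorted_wrt (\<lambda>X Y. X \<inter> Y = {}) Ms \<and> \<Union>(set Ms) = UNIV"

lemma disj_idx: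
  assumes "sorted_wrt (\<lambda>X Y. X \<inter> Y = {}) Ms" "i < length Ms" "j < length Ms" "i \<noteq> j"
  shows "Ms!i \<inter> Ms!j = {}"
proof (cases "i < j")
  case True then show ?thesis using assms by (auto simp: sorted_wrt_iff_nth_less)
next
  case False then have "j < i" using assms by simp
  then show ?thesis using assms by (auto simp: sorted_wrt_iff_nth_less)
qed

lemma represents_iff: "represents R Ms \<longleftrightarrow> opl Ms \<and> R = rel Ms"
proof
  assume r: "represents R Ms"
  have "sorted_wrt (\<lambda>X Y. X \<inter> Y = {}) Ms"
    using r unfolding represents_def sorted_wrt_iff_nth_less by auto
  moreover have "R = rel Ms" using r unfolding represents_def rel_def by blast
  ultimately show "opl Ms \<and> R = rel Ms" using r unfolding represents_def opl_def by blast
next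
  assume r: "opl Ms \<and> R = rel Ms"
  have o: "opl Ms" and e: "R = rel Ms" using r by auto
  show "represents R Ms" unfolding represents_def
  proof (intro conjI)
    show "\<forall>X\<in>set Ms. X \<noteq> {}" using o by (simp add: opl_def)
    show "\<Union> (set Ms) = UNIV" using o by (simp add: opl_def)
    show "\<forall>i<length Ms. \<forall>j<length Ms. i \<noteq> j \<longrightarrow> Ms ! i \<inter> Ms ! j = {}"
      using o disj_idx[of Ms] by (simp add: opl_def)
    show "\<forall>a b. ((a, b) \<in> R) = (\<exists>i<length Ms. \<exists>j<length Ms. i \<le> j \<and> a \<in> Ms ! i \<and> b \<in> Ms ! j)"
      using e by (simp add: rel_def)
  qed
qed

lemma rel_iff: "(a,b) \<in> rel Ms \<longleftrightarrow> (\<exists>i<length Ms. \<exists>j<length Ms. i \<le> j \<and> a \<in> Ms!i \<and> b \<in> Ms!j)"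
  by (simp add: rel_def)

lemma pref_rel:
  assumes "opl Ms" shows "pref_order (rel Ms)"
proof -
  have cov: "\<exists>i<length Ms. a \<in> Ms!i" for a
  proof -
    have "a \<in> \<Union>(set Ms)" using assms by (auto simp: opl_def)
    then show ?thesis by (auto simp: in_set_conv_nth)
  qed
  have dj: "\<And>i j a. i < length Ms \<Longrightarrow> j < length Ms \<Longrightarrow> a \<in> Ms!i \<Longrightarrow> a \<in> Ms!j \<Longrightarrow> i = j"
    using disj_idx[of Ms] assms unfolding opl_def by blast
  have "refl (rel Ms)" unfolding refl_on_def rel_iff using cov by blast
  moreover have "trans (rel Ms)" unfolding trans_def
  proof (intro allI impI)
    fix x y z assume a: "(x,y) \<in> rel Ms" and b: "(y,z) \<in> rel Ms"
    from a obtain i j where ij: "i < length Ms" "j < length Ms" "i \<le> j" "x \<in> Ms!i" "y \<in> Ms!j"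
      unfolding rel_iff by blast
    from b obtain j' k where jk: "j' < length Ms" "k < length Ms" "j' \<le> k" "y \<in> Ms!j'" "z \<in> Ms!k"
      unfolding rel_iff by blast
    have "j = j'" using dj ij jk by blast
    then have "i \<le> k" using ij jk by simp
    then show "(x,z) \<in> rel Ms" unfolding rel_iff using ij jk by blast
  qed
  moreover have "total (rel Ms)" unfolding total_on_def
  proof (intro ballI impI)
    fix x y :: 'a
    obtain i where i: "i < length Ms" "x \<in> Ms!i" using cov by blast
    obtain j where j: "j < length Ms" "y \<in> Ms!j" using cov by blast
    show "(x, y) \<in> rel Ms \<or> (y, x) \<in> rel Ms"
    proof (cases "i \<le> j")
      case True then show ?thesis unfolding rel_iff using i j by blast
    next
      case False then have "j \<le> i" by simp
      then show ?thesis unfolding rel_iff using i j by blast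
    qed
  qed
  ultimately show ?thesis by (simp add: pref_order_def)
qed

lemma pref_rank:
  fixes R :: "('a::finite \<times> 'a) set"
  assumes "pref_order R"
  shows "(a,b)\<in>R \<longleftrightarrow> card {c. (c,a)\<in>R \<and> (a,c)\<notin>R} \<le> card {c. (c,b)\<in>R \<and> (b,c)\<notin>R}"
proof -
  have rf: "(x,x)\<in>R" for x using assms by (auto simp: pref_order_def refl_on_def)
  have tr: "(x,y)\<in>R \<Longrightarrow> (y,z)\<in>R \<Longrightarrow> (x,z)\<in>R" for x y z using assms
    unfolding pref_order_def trans_def by blast
  have to: "(x,y)\<in>R \<or> (y,x)\<in>R" for x y using assms rf
    unfolding pref_order_def total_on_def by (cases "x = y") auto
  show ?thesis
  proof
    assume ab: "(a,b)\<in>R"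
    have "{c. (c,a)\<in>R \<and> (a,c)\<notin>R} \<subseteq> {c. (c,b)\<in>R \<and> (b,c)\<notin>R}"
      using ab tr by blast
    then show "card {c. (c,a)\<in>R \<and> (a,c)\<notin>R} \<le> card {c. (c,b)\<in>R \<and> (b,c)\<notin>R}"
      by (intro card_mono) auto
  next
    assume le: "card {c. (c,a)\<in>R \<and> (a,c)\<notin>R} \<le> card {c. (c,b)\<in>R \<and> (b,c)\<notin>R}"
    show "(a,b)\<in>R"
    proof (rule ccontr)
      assume nab: "(a,b)\<notin>R"
      then have ba: "(b,a)\<in>R" using to by blast
      have "insert b {c. (c,b)\<in>R \<and> (b,c)\<notin>R} \<subseteq> {c. (c,a)\<in>R \<and> (a,c)\<notin>R}"
        using ba nab tr by blast
      then have "card (insert b {c. (c,b)\<in>R \<and> (b,c)\<notin>R}) \<le> card {c. (c,a)\<in>R \<and> (a,c)\<notin>R}"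
        by (intro card_mono) auto
      moreover have "b \<notin> {c. (c,b)\<in>R \<and> (b,c)\<notin>R}" using rf by auto
      ultimately show False using le by simp
    qed
  qed
qed

lemma rep_exists:
  fixes R :: "('a::finite \<times> 'a) set"
  assumes "pref_order R"
  shows "\<exists>Ms. represents R Ms"
proof -
  define r where "r = (\<lambda>a. card {c. (c,a)\<in>R \<and> (a,c)\<notin>R})"
  have rr: "(a,b)\<in>R \<longleftrightarrow> r a \<le> r b" for a b unfolding r_def by (rule pref_rank[OF assms])
  define vs where "vs = sorted_list_of_set (range r)"
  have svs: "set vs = range r" by (simp add: vs_def)
  have sw: "sorted_wrt (<) vs" by (simp add: vs_def)
  have ex: "\<exists>i<length vs. vs!i = r a" for a
  proof -
    have "r a \<in> set vs" using svs by simp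
    then show ?thesis by (simp add: in_set_conv_nth)
  qed
  define Ms where "Ms = map (\<lambda>v. r -` {v}) vs"
  have "opl Ms" unfolding opl_def
  proof (intro conjI)
    show "\<forall>X\<in>set Ms. X \<noteq> {}"
    proof
      fix X assume "X \<in> set Ms"
      then obtain v where "v \<in> set vs" "X = r -` {v}" by (auto simp: Ms_def)
      then show "X \<noteq> {}" using svs by auto
    qed
    have "sorted_wrt (\<lambda>v w. r -` {v} \<inter> r -` {w} = {}) vs"
      by (rule sorted_wrt_mono_rel[OF _ sw]) auto
    then show "sorted_wrt (\<lambda>X Y. X \<inter> Y = {}) Ms" unfolding Ms_def sorted_wrt_map .
    show "\<Union> (set Ms) = UNIV"
    proof (rule set_eqI)
      fix a
      have "r -` {r a} \<in> set Ms" using svs unfolding Ms_def by simp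
      then show "a \<in> \<Union> (set Ms) \<longleftrightarrow> a \<in> UNIV" by blast
    qed
  qed
  moreover have "R = rel Ms"
  proof (rule set_eqI)
    fix p :: "'a \<times> 'a"
    obtain a b where p: "p = (a,b)" by (cases p)
    have "(a,b)\<in>R \<longleftrightarrow> (a,b) \<in> rel Ms"
    proof
      assume "(a,b)\<in>R"
      then have le: "r a \<le> r b" using rr by simp
      obtain i where i: "i < length vs" "vs!i = r a" using ex by blast
      obtain j where j: "j < length vs" "vs!j = r b" using ex by blast
      have "i \<le> j"
      proof (rule ccontr)
        assume "\<not> i \<le> j"
        then have "j < i" by simp
        then have "vs!j < vs!i" using sw \<open>i < length vs\<close> unfolding sorted_wrt_iff_nth_less by blast
        then show False using i j le by simp
      qed
      moreover have "a \<in> Ms!i" "b \<in> Ms!j" "i < length Ms" "j < length Ms"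
        using i j by (auto simp: Ms_def)
      ultimately show "(a,b) \<in> rel Ms" unfolding rel_iff by blast
    next
      assume "(a,b) \<in> rel Ms"
      then obtain i j where ij0: "i < length Ms" "j < length Ms" "i \<le> j" "a \<in> Ms!i" "b \<in> Ms!j"
        unfolding rel_iff by blast
      then have ij: "i < length vs" "j < length vs" "i \<le> j" "r a = vs!i" "r b = vs!j"
        by (auto simp: Ms_def)
      have "sorted vs" by (simp add: vs_def)
      then have "r a \<le> r b" using ij by (simp add: sorted_nth_mono)
      then show "(a,b)\<in>R" using rr by simp
    qed
    then show "p \<in> R \<longleftrightarrow> p \<in> rel Ms" using p by simp
  qed
  ultimately show ?thesis using represents_iff by blast
qed


lemma setprob_empty[simp]: "setprob x {} = 0" by (simp add: setprob_def)

lemma setprob_union: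
  "A \<inter> B = {} \<Longrightarrow> setprob (x::'a::finite \<Rightarrow> real) (A \<union> B) = setprob x A + setprob x B"
  by (simp add: setprob_def sum.union_disjoint)

lemma setprob_list:
  "sorted_wrt (\<lambda>X Y. X \<inter> Y = {}) Ls \<Longrightarrow>
   setprob (x::'a::finite \<Rightarrow> real) (\<Union>(set Ls)) = sum_list (map (setprob x) Ls)"
proof (induction Ls)
  case Nil then show ?case by simp
next
  case (Cons X Ls)
  have "X \<inter> \<Union>(set Ls) = {}" using Cons.prems by auto
  then show ?case using Cons by (simp add: setprob_union)
qed

lemma lottery_UNIV: "lottery x \<Longrightarrow> setprob x UNIV = 1"
  by (simp add: lottery_def setprob_def)

lemma Union_take: "x \<in> \<Union>(set (take n Ms)) \<longleftrightarrow> (\<exists>l<n. l < length Ms \<and> x \<in> Ms!l)"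
proof
  assume "x \<in> \<Union>(set (take n Ms))"
  then obtain Y where "Y \<in> set (take n Ms)" "x \<in> Y" by blast
  then obtain l where "l < length (take n Ms)" "take n Ms ! l = Y" by (auto simp: in_set_conv_nth)
  then show "\<exists>l<n. l < length Ms \<and> x \<in> Ms!l" using \<open>x \<in> Y\<close> by auto
next
  assume "\<exists>l<n. l < length Ms \<and> x \<in> Ms!l"
  then obtain l where l: "l < n" "l < length Ms" "x \<in> Ms!l" by blast
  then have "take n Ms ! l \<in> set (take n Ms)" by (intro nth_mem) simp
  then show "x \<in> \<Union>(set (take n Ms))" using l by auto
qed

lemma opl_merge: "opl (xs @ [A, B] @ ys) \<Longrightarrow> opl (xs @ [A \<union> B] @ ys)"
  unfolding opl_def by (auto simp: sorted_wrt_append)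

lemma opl_split: "opl (xs @ [A \<union> B] @ ys) \<Longrightarrow> A \<inter> B = {} \<Longrightarrow> A \<noteq> {} \<Longrightarrow> B \<noteq> {} \<Longrightarrow>
   opl (xs @ [A, B] @ ys)"
  unfolding opl_def by (auto simp: sorted_wrt_append)

lemma uc:
  assumes "represents R Ms" "i < length Ms" "a \<in> Ms!i"
  shows "{j. (j,a)\<in>R} = \<Union>(set (take (Suc i) Ms))"
proof -
  have o: "opl Ms" and e: "R = rel Ms" using assms represents_iff by blast+
  have dj: "\<And>i j a. i < length Ms \<Longrightarrow> j < length Ms \<Longrightarrow> a \<in> Ms!i \<Longrightarrow> a \<in> Ms!j \<Longrightarrow> i = j"
    using disj_idx[of Ms] o unfolding opl_def by blast
  show ?thesis
  proof (rule set_eqI)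
    fix j
    have "(j,a) \<in> R \<longleftrightarrow> (\<exists>l<Suc i. l < length Ms \<and> j \<in> Ms!l)"
    proof
      assume "(j,a) \<in> R"
      then obtain l l' where "l < length Ms" "l' < length Ms" "l \<le> l'" "j \<in> Ms!l" "a \<in> Ms!l'"
        unfolding e rel_iff by blast
      moreover then have "l' = i" using dj assms by blast
      ultimately have "l < Suc i" "l < length Ms" "j \<in> Ms!l" by auto
      then show "\<exists>l<Suc i. l < length Ms \<and> j \<in> Ms!l" by blast
    next
      assume "\<exists>l<Suc i. l < length Ms \<and> j \<in> Ms!l"
      then obtain l where "l \<le> i" "l < length Ms" "j \<in> Ms!l" by (auto simp: less_Suc_eq_le)
      then show "(j,a) \<in> R" unfolding e rel_iff using assms by blast
    qed
    then show "j \<in> {j. (j,a)\<in>R} \<longleftrightarrow> j \<in> \<Union>(set (take (Suc i) Ms))"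
      unfolding Union_take by simp
  qed
qed

locale sax =
  fixes \<phi> :: "('a::finite \<times> 'a) set \<Rightarrow> 'a \<Rightarrow> real"
  assumes mech: "mechanism \<phi>" and resp: "sep_responsive \<phi>"
    and upi: "sep_upper_invariant \<phi>" and lowi: "sep_lower_invariant \<phi>"
begin

lemma one: "opl Ms \<Longrightarrow> setprob (\<phi> (rel Ms)) UNIV = 1"
  using mech pref_rel lottery_UNIV unfolding mechanism_def by blast

lemma sepv:
  assumes o: "opl (xs @ [A \<union> B] @ ys)" and d: "A \<inter> B = {}" "A \<noteq> {}" "B \<noteq> {}"
  shows "opl (xs @ [A, B] @ ys)"
    and "\<forall>Z\<in>set (xs @ [A \<union> B] @ ys). setprob (\<phi> (rel (xs @ [A, B] @ ys))) Z = setprob (\<phi> (rel (xs @ [A \<union> B] @ ys))) Z"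
    and "setprob (\<phi> (rel (xs @ [A, B] @ ys))) A \<ge> setprob (\<phi> (rel (xs @ [A \<union> B] @ ys))) A"
proof -
  define M1 where "M1 = xs @ [A \<union> B] @ ys"
  define M2 where "M2 = xs @ [A, B] @ ys"
  show o2: "opl (xs @ [A, B] @ ys)" using opl_split[OF o d] .
  have sep: "separation (rel M1) (rel M2) M1 (length xs) A B"
    unfolding separation_def
  proof (intro conjI)
    show "pref_order (rel M1)" using pref_rel o M1_def by simp
    show "pref_order (rel M2)" using pref_rel o2 M2_def by simp
    show "represents (rel M1) M1" using o M1_def by (simp add: represents_iff)
    show "represents (rel M2) (take (length xs) M1 @ [A, B] @ drop (Suc (length xs)) M1)"
      using o2 M2_def M1_def by (simp add: represents_iff)
  qed (use d M1_def in auto)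
  have up: "\<forall>i<length xs. setprob (\<phi> (rel M1)) (M1 ! i) = setprob (\<phi> (rel M2)) (M1 ! i)"
    using upi sep unfolding sep_upper_invariant_def by blast
  have lo: "\<forall>i. length xs < i \<and> i < length M1 \<longrightarrow> setprob (\<phi> (rel M1)) (M1 ! i) = setprob (\<phi> (rel M2)) (M1 ! i)"
    using lowi sep unfolding sep_lower_invariant_def by blast
  have rA: "setprob (\<phi> (rel M2)) A \<ge> setprob (\<phi> (rel M1)) A"
    using resp sep unfolding sep_responsive_def by blast
  have hx: "\<forall>Z\<in>set xs. setprob (\<phi> (rel M2)) Z = setprob (\<phi> (rel M1)) Z"
  proof
    fix Z assume "Z \<in> set xs"
    then obtain i where "i < length xs" "xs ! i = Z" by (auto simp: in_set_conv_nth)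
    moreover then have "M1 ! i = Z" by (simp add: M1_def nth_append)
    ultimately show "setprob (\<phi> (rel M2)) Z = setprob (\<phi> (rel M1)) Z" using up by metis
  qed
  have hy: "\<forall>Z\<in>set ys. setprob (\<phi> (rel M2)) Z = setprob (\<phi> (rel M1)) Z"
  proof
    fix Z assume "Z \<in> set ys"
    then obtain i where i: "i < length ys" "ys ! i = Z" by (auto simp: in_set_conv_nth)
    have "M1 ! (length xs + Suc i) = Z" using i by (simp add: M1_def nth_append)
    moreover have "length xs < length xs + Suc i" "length xs + Suc i < length M1" using i by (auto simp: M1_def)
    ultimately show "setprob (\<phi> (rel M2)) Z = setprob (\<phi> (rel M1)) Z" using lo by metis
  qed
  have s1: "setprob x UNIV = sum_list (map (setprob x) M1)" for x
    using setprob_list[of M1 x] o unfolding opl_def M1_def by simp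
  have "sum_list (map (setprob (\<phi> (rel M2))) xs) = sum_list (map (setprob (\<phi> (rel M1))) xs)"
    using hx by (metis map_eq_conv)
  moreover have "sum_list (map (setprob (\<phi> (rel M2))) ys) = sum_list (map (setprob (\<phi> (rel M1))) ys)"
    using hy by (metis map_eq_conv)
  moreover have "sum_list (map (setprob (\<phi> (rel M2))) M1) = 1" using s1 one[OF o2] M2_def by simp
  moreover have "sum_list (map (setprob (\<phi> (rel M1))) M1) = 1" using s1 one[OF o] M1_def by simp
  ultimately have hc: "setprob (\<phi> (rel M2)) (A \<union> B) = setprob (\<phi> (rel M1)) (A \<union> B)"
    unfolding M1_def by simp
  show "\<forall>Z\<in>set (xs @ [A \<union> B] @ ys). setprob (\<phi> (rel (xs @ [A, B] @ ys))) Z = setprob (\<phi> (rel (xs @ [A \<union> B] @ ys))) Z"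
    using hx hy hc unfolding M1_def M2_def by auto
  show "setprob (\<phi> (rel (xs @ [A, B] @ ys))) A \<ge> setprob (\<phi> (rel (xs @ [A \<union> B] @ ys))) A"
    using rA unfolding M1_def M2_def .
qed

end



context sax begin
lemma merge_union:
  assumes o: "opl (xs @ [A, B] @ ys)" and s: "set Zs \<subseteq> set (xs @ [A \<union> B] @ ys)"
    and sw: "sorted_wrt (\<lambda>X Y. X \<inter> Y = {}) Zs"
  shows "setprob (\<phi> (rel (xs @ [A, B] @ ys))) (\<Union>(set Zs)) = setprob (\<phi> (rel (xs @ [A \<union> B] @ ys))) (\<Union>(set Zs))"
proof -
  have o': "opl (xs @ [A \<union> B] @ ys)" using opl_merge[OF o] .
  have d: "A \<inter> B = {}" "A \<noteq> {}" "B \<noteq> {}" using o unfolding opl_def by (simp_all add: sorted_wrt_append)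
  have eq: "\<forall>Z\<in>set Zs. setprob (\<phi> (rel (xs @ [A, B] @ ys))) Z = setprob (\<phi> (rel (xs @ [A \<union> B] @ ys))) Z"
    using sepv(2)[OF o' d] s by blast
  have "map (setprob (\<phi> (rel (xs @ [A, B] @ ys)))) Zs = map (setprob (\<phi> (rel (xs @ [A \<union> B] @ ys)))) Zs"
    using eq by (simp only: map_eq_conv)
  then show ?thesis unfolding setprob_list[OF sw] by (rule arg_cong[where f=sum_list])
qed

definition g :: "'a set \<Rightarrow> real" where
  "g V = setprob (\<phi> (rel (filter (\<lambda>X. X \<noteq> {}) [V, -V]))) V"

lemma g_empty: "g {} = 0" by (simp add: g_def)

lemma g_UNIV: "g UNIV = 1"
proof -
  have "filter (\<lambda>X. X \<noteq> {}) [UNIV, - (UNIV::'a set)] = [UNIV]" by simp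
  moreover have "opl [UNIV::'a set]" by (simp add: opl_def)
  ultimately show ?thesis using one by (simp add: g_def)
qed

lemma k1: "opl (xs @ ys) \<Longrightarrow> setprob (\<phi> (rel (xs @ ys))) (\<Union>(set xs)) = g (\<Union>(set xs))"
proof (induction "length (xs @ ys)" arbitrary: xs ys rule: less_induct)
  case less
  show ?case
  proof (cases "xs = []")
    case True then show ?thesis by (simp add: g_empty)
  next
    case xsne: False
    show ?thesis
    proof (cases "ys = []")
      case True
      then have "\<Union>(set xs) = UNIV" using less.prems by (simp add: opl_def)
      then show ?thesis using one less.prems True g_UNIV by simp
    next
      case ysne: False
      obtain X xs' where xs: "xs = X # xs'" using xsne by (cases xs) auto
      obtain Y ys' where ys: "ys = Y # ys'" using ysne by (cases ys) auto
      show ?thesis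
      proof (cases xs')
        case (Cons X2 xs'')
        have o0: "opl ([] @ [X, X2] @ (xs'' @ ys))" using less.prems xs Cons by simp
        have o': "opl ([] @ [X \<union> X2] @ (xs'' @ ys))" using opl_merge[OF o0] .
        have sw: "sorted_wrt (\<lambda>X Y. X \<inter> Y = {}) ((X \<union> X2) # xs'')"
          using o' unfolding opl_def by (simp add: sorted_wrt_append)
        have ss: "set ((X \<union> X2) # xs'') \<subseteq> set ([] @ [X \<union> X2] @ (xs'' @ ys))" by auto
        have u: "\<Union>(set xs) = \<Union>(set ((X \<union> X2) # xs''))" using xs Cons by auto
        have e: "xs @ ys = [] @ [X, X2] @ (xs'' @ ys)" using xs Cons by simp
        have m: "setprob (\<phi> (rel (xs @ ys))) (\<Union>(set xs)) = setprob (\<phi> (rel ([] @ [X \<union> X2] @ (xs'' @ ys)))) (\<Union>(set ((X \<union> X2) # xs'')))"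
          unfolding u e by (rule merge_union[OF o0 ss sw])
        have l: "length (((X \<union> X2) # xs'') @ ys) < length (xs @ ys)" using xs Cons by simp
        have o2: "opl (((X \<union> X2) # xs'') @ ys)" using o' by simp
        have "setprob (\<phi> (rel (((X \<union> X2) # xs'') @ ys))) (\<Union>(set ((X \<union> X2) # xs''))) = g (\<Union>(set ((X \<union> X2) # xs'')))"
          by (rule less.hyps[OF l o2])
        then show ?thesis using m u by simp
      next
        case Nil
        show ?thesis
        proof (cases ys')
          case Nil2: Nil
          have o: "opl [X, Y]" using less.prems xs ys Nil Nil2 by simp
          then have "X \<inter> Y = {}" "X \<union> Y = UNIV" "X \<noteq> {}" "Y \<noteq> {}" by (auto simp: opl_def)
          then have "- X = Y" by blast
          then have "filter (\<lambda>X. X \<noteq> {}) [X, -X] = [X, Y]" using \<open>X \<noteq> {}\<close> \<open>Y \<noteq> {}\<close> by simp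
          then show ?thesis using xs ys Nil Nil2 by (simp add: g_def)
        next
          case (Cons Y2 ys'')
          have o0: "opl ([X] @ [Y, Y2] @ ys'')" using less.prems xs ys Nil Cons by simp
          have o': "opl ([X] @ [Y \<union> Y2] @ ys'')" using opl_merge[OF o0] .
          have sw: "sorted_wrt (\<lambda>X Y. X \<inter> Y = {}) [X]" by simp
          have ss: "set [X] \<subseteq> set ([X] @ [Y \<union> Y2] @ ys'')" by auto
          have e: "xs @ ys = [X] @ [Y, Y2] @ ys''" using xs ys Nil Cons by simp
          have u: "\<Union>(set xs) = \<Union>(set [X])" using xs Nil by simp
          have m: "setprob (\<phi> (rel (xs @ ys))) (\<Union>(set xs)) = setprob (\<phi> (rel ([X] @ [Y \<union> Y2] @ ys''))) (\<Union>(set [X]))"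
            unfolding u e by (rule merge_union[OF o0 ss sw])
          have l: "length ([X] @ ((Y \<union> Y2) # ys'')) < length (xs @ ys)" using xs ys Nil Cons by simp
          have o2: "opl ([X] @ ((Y \<union> Y2) # ys''))" using o' by simp
          have "setprob (\<phi> (rel ([X] @ ((Y \<union> Y2) # ys'')))) (\<Union>(set [X])) = g (\<Union>(set [X]))"
            by (rule less.hyps[OF l o2])
          then show ?thesis using m u by simp
        qed
      qed
    qed
  qed
qed

lemma k2:
  assumes o: "opl (xs @ [X] @ ys)" and v: "V \<subseteq> X"
  shows "setprob (\<phi> (rel (xs @ [X] @ ys))) (\<Union>(set xs) \<union> V) \<le> g (\<Union>(set xs) \<union> V)"
proof (cases "V = {}")
  case True
  have "opl (xs @ (X # ys))" using o by simp
  from k1[OF this] show ?thesis using True by simp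
next
  case F1: False
  show ?thesis
  proof (cases "V = X")
    case True
    have "opl ((xs @ [X]) @ ys)" using o by simp
    from k1[OF this] show ?thesis using True by (simp add: Un_commute)
  next
    case False
    define B where "B = X - V"
    have XB: "V \<union> B = X" using v B_def by auto
    have d: "V \<inter> B = {}" "V \<noteq> {}" "B \<noteq> {}" using F1 False v B_def by auto
    have ex: "xs @ [X] @ ys = xs @ [V \<union> B] @ ys" using XB by simp
    have o1: "opl (xs @ [V \<union> B] @ ys)" using o unfolding ex .
    note s = sepv[OF o1 d]
    have swx: "sorted_wrt (\<lambda>X Y. X \<inter> Y = {}) xs" using o unfolding opl_def by (simp add: sorted_wrt_append)
    have dj0: "\<forall>x\<in>set xs. x \<inter> X = {}" using o unfolding opl_def by (simp add: sorted_wrt_append)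
    have dj: "\<Union>(set xs) \<inter> V = {}" using dj0 v by blast
    have ss: "set xs \<subseteq> set (xs @ [V \<union> B] @ ys)" by auto
    have mx: "setprob (\<phi> (rel (xs @ [V, B] @ ys))) (\<Union>(set xs)) = setprob (\<phi> (rel (xs @ [V \<union> B] @ ys))) (\<Union>(set xs))"
      by (rule merge_union[OF s(1) ss swx])
    have o2: "opl ((xs @ [V]) @ (B # ys))" using s(1) by simp
    have kk: "setprob (\<phi> (rel ((xs @ [V]) @ (B # ys)))) (\<Union>(set (xs @ [V]))) = g (\<Union>(set (xs @ [V])))"
      by (rule k1[OF o2])
    have "setprob (\<phi> (rel (xs @ [V \<union> B] @ ys))) (\<Union>(set xs) \<union> V)
        = setprob (\<phi> (rel (xs @ [V \<union> B] @ ys))) (\<Union>(set xs)) + setprob (\<phi> (rel (xs @ [V \<union> B] @ ys))) V"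
      by (rule setprob_union[OF dj])
    also have "\<dots> \<le> setprob (\<phi> (rel (xs @ [V, B] @ ys))) (\<Union>(set xs)) + setprob (\<phi> (rel (xs @ [V, B] @ ys))) V"
      using mx s(3) by simp
    also have "\<dots> = setprob (\<phi> (rel (xs @ [V, B] @ ys))) (\<Union>(set xs) \<union> V)"
      by (rule setprob_union[OF dj, symmetric])
    also have "\<dots> = g (\<Union>(set xs) \<union> V)" using kk by (simp add: Un_commute)
    finally show ?thesis unfolding ex .
  qed
qed

lemma k3:
  assumes a: "S \<inter> X = {}" "S \<inter> Z = {}" "X \<inter> Z = {}"
  shows "g (S \<union> X \<union> Z) + g S \<le> g (S \<union> X) + g (S \<union> Z)"
proof (cases "X = {} \<or> Z = {}")
  case True then show ?thesis by auto
next
  case False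
  define fS where "fS = filter (\<lambda>Y. Y \<noteq> {}) [S]"
  define fR where "fR = filter (\<lambda>Y. Y \<noteq> {}) [- (S \<union> X \<union> Z)]"
  have uS: "\<Union>(set fS) = S" by (auto simp: fS_def)
  have o: "opl (fS @ [X \<union> Z] @ fR)" unfolding opl_def
  proof (intro conjI)
    show "\<forall>Y\<in>set (fS @ [X \<union> Z] @ fR). Y \<noteq> {}" using False by (auto simp: fS_def fR_def)
    show "sorted_wrt (\<lambda>X Y. X \<inter> Y = {}) (fS @ [X \<union> Z] @ fR)"
      using a by (auto simp: fS_def fR_def sorted_wrt_append)
    show "\<Union> (set (fS @ [X \<union> Z] @ fR)) = UNIV" by (auto simp: fS_def fR_def)
  qed
  have d1: "X \<inter> Z = {}" "X \<noteq> {}" "Z \<noteq> {}" using a False by auto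
  have d2: "Z \<inter> X = {}" "Z \<noteq> {}" "X \<noteq> {}" using a False by auto
  have o': "opl (fS @ [Z \<union> X] @ fR)" using o by (simp add: Un_commute)
  note s1 = sepv[OF o d1]
  note s2 = sepv[OF o' d2]
  define x0 where "x0 = \<phi> (rel (fS @ [X \<union> Z] @ fR))"
  define x1 where "x1 = \<phi> (rel (fS @ [X, Z] @ fR))"
  define x2 where "x2 = \<phi> (rel (fS @ [Z, X] @ fR))"
  have x0': "\<phi> (rel (fS @ [Z \<union> X] @ fR)) = x0" by (simp add: x0_def Un_commute)
  have e1: "setprob x1 (X \<union> Z) = setprob x0 (X \<union> Z)" using s1(2) unfolding x0_def x1_def by simp
  have i1: "setprob x1 X \<ge> setprob x0 X" using s1(3) unfolding x0_def x1_def by simp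
  have i2: "setprob x2 Z \<ge> setprob x0 Z" using s2(3) unfolding x0' x2_def by simp
  have ka: "setprob x1 (S \<union> X) = g (S \<union> X)"
  proof -
    have "opl ((fS @ [X]) @ (Z # fR))" using s1(1) by simp
    from k1[OF this] show ?thesis unfolding x1_def using uS by (simp add: Un_commute)
  qed
  have kb: "setprob x1 (S \<union> X \<union> Z) = g (S \<union> X \<union> Z)"
  proof -
    have "opl ((fS @ [X, Z]) @ fR)" using s1(1) by simp
    from k1[OF this] show ?thesis unfolding x1_def using uS by (simp add: Un_ac)
  qed
  have kc: "setprob x2 S = g S"
  proof -
    have "opl (fS @ (Z # X # fR))" using s2(1) by simp
    from k1[OF this] show ?thesis unfolding x2_def using uS by simp
  qed
  have kd: "setprob x2 (S \<union> Z) = g (S \<union> Z)"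
  proof -
    have "opl ((fS @ [Z]) @ (X # fR))" using s2(1) by simp
    from k1[OF this] show ?thesis unfolding x2_def using uS by (simp add: Un_commute)
  qed
  have u1: "setprob x1 (S \<union> X \<union> Z) = setprob x1 (S \<union> X) + setprob x1 Z"
    by (rule setprob_union) (use a in auto)
  have u2: "setprob x2 (S \<union> Z) = setprob x2 S + setprob x2 Z"
    by (rule setprob_union) (use a in auto)
  have u3: "setprob x1 (X \<union> Z) = setprob x1 X + setprob x1 Z"
    by (rule setprob_union) (use a in auto)
  have u4: "setprob x0 (X \<union> Z) = setprob x0 X + setprob x0 Z"
    by (rule setprob_union) (use a in auto)
  show ?thesis using e1 i1 i2 ka kb kc kd u1 u2 u3 u4 by linarith
qed

lemma mainineq:
  assumes o: "opl Ms"
  shows "setprob (\<phi> (rel Ms)) V \<le> g V"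
proof -
  define x where "x = \<phi> (rel Ms)"
  define n where "n = length Ms"
  define W where "W j = \<Union>(set (take j Ms))" for j
  define h where "h j = g (V \<inter> W j)" for j
  have sw: "sorted_wrt (\<lambda>X Y. X \<inter> Y = {}) Ms" using o by (simp add: opl_def)
  have step: "setprob x (V \<inter> Ms!j) \<le> h (Suc j) - h j" if jn: "j < n" for j
  proof -
    have jl: "j < length Ms" using jn n_def by simp
    have e: "take j Ms @ [Ms!j] @ drop (Suc j) Ms = Ms"
      using jl by (simp add: Cons_nth_drop_Suc)
    have o1: "opl (take j Ms @ [Ms!j] @ drop (Suc j) Ms)" unfolding e by (rule o)
    have a1: "setprob x (W j \<union> (V \<inter> Ms!j)) \<le> g (W j \<union> (V \<inter> Ms!j))"
      using k2[OF o1, of "V \<inter> Ms!j"] unfolding e x_def W_def by simp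
    have o2: "opl (take j Ms @ drop j Ms)" using o by simp
    have a2: "setprob x (W j) = g (W j)"
      using k1[OF o2] unfolding x_def W_def by simp
    have dj: "W j \<inter> Ms!j = {}"
    proof (rule ccontr)
      assume "W j \<inter> Ms!j \<noteq> {}"
      then obtain y where "y \<in> W j" "y \<in> Ms!j" by blast
      then obtain l where "l < j" "l < length Ms" "y \<in> Ms!l" unfolding W_def Union_take by blast
      then have "Ms!l \<inter> Ms!j = {}" using disj_idx[OF sw _ jl, of l] by simp
      then show False using \<open>y \<in> Ms!l\<close> \<open>y \<in> Ms!j\<close> by blast
    qed
    have a3: "setprob x (W j \<union> (V \<inter> Ms!j)) = setprob x (W j) + setprob x (V \<inter> Ms!j)"
      by (rule setprob_union) (use dj in blast)
    have a4: "g ((V \<inter> W j) \<union> (W j - V) \<union> (V \<inter> Ms!j)) + g (V \<inter> W j)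
        \<le> g ((V \<inter> W j) \<union> (W j - V)) + g ((V \<inter> W j) \<union> (V \<inter> Ms!j))"
      by (rule k3) (use dj in blast)+
    have WS: "W (Suc j) = W j \<union> Ms!j" unfolding W_def using jl by (simp add: take_Suc_conv_app_nth Un_commute)
    have b1: "(V \<inter> W j) \<union> (W j - V) \<union> (V \<inter> Ms!j) = W j \<union> (V \<inter> Ms!j)" by blast
    have b2: "(V \<inter> W j) \<union> (W j - V) = W j" by blast
    have b3: "(V \<inter> W j) \<union> (V \<inter> Ms!j) = V \<inter> W (Suc j)" unfolding WS by blast
    have "g (W j \<union> (V \<inter> Ms!j)) + h j \<le> g (W j) + h (Suc j)"
      using a4 unfolding b1 b2 b3 h_def .
    then show ?thesis using a1 a2 a3 by linarith
  qed
  define Ls where "Ls = map (\<lambda>Z. V \<inter> Z) Ms"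
  have swL: "sorted_wrt (\<lambda>X Y. X \<inter> Y = {}) Ls"
    unfolding Ls_def sorted_wrt_map by (rule sorted_wrt_mono_rel[OF _ sw]) blast
  have uL: "\<Union>(set Ls) = V"
  proof -
    have "\<Union>(set Ls) = V \<inter> \<Union>(set Ms)" unfolding Ls_def by auto
    then show ?thesis using o by (simp add: opl_def)
  qed
  have "setprob x V = sum_list (map (setprob x) Ls)"
    using setprob_list[OF swL, of x] unfolding uL .
  also have "\<dots> = (\<Sum>j<n. setprob x (V \<inter> Ms!j))"
    unfolding sum_list_sum_nth Ls_def n_def by (simp add: atLeast0LessThan)
  also have "\<dots> \<le> (\<Sum>j<n. h (Suc j) - h j)"
    by (rule sum_mono) (use step in simp)
  also have "\<dots> = h n - h 0" by (rule sum_lessThan_telescope)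
  also have "\<dots> = g V"
  proof -
    have "W n = UNIV" using o unfolding W_def n_def by (simp add: opl_def)
    moreover have "W 0 = {}" unfolding W_def by simp
    ultimately show ?thesis unfolding h_def by (simp add: g_empty)
  qed
  finally show ?thesis unfolding x_def .
qed

lemma sp: "strategyproof \<phi>"
  unfolding strategyproof_def fosd_def
proof (intro allI impI)
  fix R R' :: "('a \<times> 'a) set" and a :: 'a
  assume pr: "pref_order R \<and> pref_order R'"
  obtain Ms where rm: "represents R Ms" using rep_exists pr by blast
  obtain Ms' where rm': "represents R' Ms'" using rep_exists pr by blast
  have om: "opl Ms" and eR: "R = rel Ms" using rm represents_iff by blast+
  have om': "opl Ms'" and eR': "R' = rel Ms'" using rm' represents_iff by blast+
  have "a \<in> \<Union>(set Ms)" using om by (simp add: opl_def)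
  then obtain i where i: "i < length Ms" "a \<in> Ms!i" by (auto simp: in_set_conv_nth)
  have V: "{j. (j,a)\<in>R} = \<Union>(set (take (Suc i) Ms))" by (rule uc[OF rm i])
  have o2: "opl (take (Suc i) Ms @ drop (Suc i) Ms)" using om by simp
  have "setprob (\<phi> R) {j. (j,a)\<in>R} = g {j. (j,a)\<in>R}"
    unfolding V using k1[OF o2] eR by simp
  moreover have "setprob (\<phi> R') {j. (j,a)\<in>R} \<le> g {j. (j,a)\<in>R}"
    using mainineq[OF om'] unfolding eR' .
  ultimately show "setprob (\<phi> R') {j. (j, a) \<in> R} \<le> setprob (\<phi> R) {j. (j, a) \<in> R}" by simp
qed
end

lemma sp_core:
  fixes \<phi> :: "('a::finite \<times> 'a) set \<Rightarrow> 'a \<Rightarrow> real"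
  assumes spf: "strategyproof \<phi>" and sep: "separation R R' Ms k A B"
  shows "(\<forall>i<length Ms. setprob (\<phi> R) (Ms!i) = setprob (\<phi> R') (Ms!i)) \<and>
         setprob (\<phi> R') A \<ge> setprob (\<phi> R) A \<and> setprob (\<phi> R') B \<le> setprob (\<phi> R) B"
proof -
  have pR: "pref_order R" and pR': "pref_order R'" and rm: "represents R Ms" and kl: "k < length Ms"
    and AB: "A \<union> B = Ms!k" "A \<inter> B = {}" "A \<noteq> {}" "B \<noteq> {}"
    and rm2: "represents R' (take k Ms @ [A, B] @ drop (Suc k) Ms)"
    using sep unfolding separation_def by blast+
  define xs where "xs = take k Ms"
  define ys where "ys = drop (Suc k) Ms"
  define X where "X = Ms!k"
  define Ms2 where "Ms2 = xs @ [A, B] @ ys"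
  have rm2': "represents R' Ms2" using rm2 unfolding Ms2_def xs_def ys_def .
  have Mse: "Ms = xs @ [X] @ ys" unfolding xs_def ys_def X_def using kl by (simp add: Cons_nth_drop_Suc)
  have lx: "length xs = k" unfolding xs_def using kl by simp
  have om: "opl Ms" using rm represents_iff by blast
  have om2: "opl Ms2" using rm2' represents_iff by blast
  have sw: "sorted_wrt (\<lambda>X Y. X \<inter> Y = {}) Ms" using om by (simp add: opl_def)
  define W where "W n = \<Union>(set (take n Ms))" for n
  have f1: "setprob (\<phi> R) {j. (j,a)\<in>R} \<ge> setprob (\<phi> R') {j. (j,a)\<in>R}" for a
    using spf pR pR' unfolding strategyproof_def fosd_def by blast
  have f2: "setprob (\<phi> R') {j. (j,a)\<in>R'} \<ge> setprob (\<phi> R) {j. (j,a)\<in>R'}" for a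
    using spf pR pR' unfolding strategyproof_def fosd_def by blast
  have upR: "\<exists>a. W n = {j. (j,a)\<in>R}" if "0 < n" "n \<le> length Ms" for n
  proof -
    have il: "n - 1 < length Ms" using that by simp
    have "Ms!(n-1) \<noteq> {}" using om il by (simp add: opl_def)
    then obtain a where a: "a \<in> Ms!(n-1)" by blast
    have "{j. (j,a)\<in>R} = W n" using uc[OF rm il a] that unfolding W_def by simp
    then show ?thesis by blast
  qed
  have upR': "\<exists>a. W n = {j. (j,a)\<in>R'}" if "0 < n" "n \<le> length Ms" for n
  proof (cases "n \<le> k")
    case True
    have "length Ms = Suc (k + length ys)" using lx by (subst Mse) simp
    then have il: "n - 1 < length Ms2" using that lx unfolding Ms2_def by simp
    have "Ms2!(n-1) \<noteq> {}" using om2 il by (simp add: opl_def)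
    then obtain a where a: "a \<in> Ms2!(n-1)" by blast
    have tk: "take n Ms2 = take n Ms" unfolding Ms2_def using Mse lx True by simp
    have "{j. (j,a)\<in>R'} = W n" using uc[OF rm2' il a] that tk unfolding W_def by simp
    then show ?thesis by blast
  next
    case False
    then obtain m where nm: "n = k + Suc m" by (metis add_Suc_right less_imp_Suc_add not_le)
    have il: "n < length Ms2" using that unfolding Ms2_def using Mse lx by simp
    have "Ms2!n \<noteq> {}" using om2 il by (simp add: opl_def)
    then obtain a where a: "a \<in> Ms2!n" by blast
    have t1: "take n Ms = xs @ X # take m ys" unfolding nm using Mse lx by simp
    have t2: "take (Suc n) Ms2 = xs @ A # B # take m ys" unfolding nm Ms2_def using lx by simp
    have "\<Union>(set (take (Suc n) Ms2)) = W n" unfolding W_def t1 t2 using AB(1) X_def by auto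
    then have "{j. (j,a)\<in>R'} = W n" using uc[OF rm2' il a] by simp
    then show ?thesis by blast
  qed
  have eqW: "setprob (\<phi> R) (W n) = setprob (\<phi> R') (W n)" if nl: "n \<le> length Ms" for n
  proof (cases "n = 0")
    case True then show ?thesis unfolding W_def by simp
  next
    case False
    then have n0: "0 < n" by simp
    obtain a where a: "W n = {j. (j,a)\<in>R}" using upR[OF n0 nl] by blast
    obtain b where b: "W n = {j. (j,b)\<in>R'}" using upR'[OF n0 nl] by blast
    have "setprob (\<phi> R) (W n) \<ge> setprob (\<phi> R') (W n)" using f1[of a] unfolding a[symmetric] .
    moreover have "setprob (\<phi> R') (W n) \<ge> setprob (\<phi> R) (W n)" using f2[of b] unfolding b[symmetric] .
    ultimately show ?thesis by linarith
  qed
  have blk: "setprob (\<phi> R) (Ms!i) = setprob (\<phi> R') (Ms!i)" if il: "i < length Ms" for i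
  proof -
    have WS: "W (Suc i) = W i \<union> Ms!i" unfolding W_def using il by (simp add: take_Suc_conv_app_nth Un_commute)
    have dj: "W i \<inter> Ms!i = {}"
    proof (rule ccontr)
      assume "W i \<inter> Ms!i \<noteq> {}"
      then obtain y where "y \<in> W i" "y \<in> Ms!i" by blast
      then obtain l where "l < i" "l < length Ms" "y \<in> Ms!l" unfolding W_def Union_take by blast
      then have "Ms!l \<inter> Ms!i = {}" using disj_idx[OF sw _ il, of l] by simp
      then show False using \<open>y \<in> Ms!l\<close> \<open>y \<in> Ms!i\<close> by blast
    qed
    have "setprob (\<phi> R) (W (Suc i)) = setprob (\<phi> R') (W (Suc i))" using eqW il by simp
    moreover have "setprob (\<phi> R) (W i) = setprob (\<phi> R') (W i)" using eqW il by simp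
    ultimately show ?thesis unfolding WS using setprob_union[OF dj] by simp
  qed
  have Wk: "W k = \<Union>(set xs)" unfolding W_def xs_def ..
  have djk: "W k \<inter> A = {}"
  proof -
    have "\<forall>x\<in>set xs. x \<inter> X = {}" using om Mse unfolding opl_def by (simp add: sorted_wrt_append)
    then show ?thesis using Wk AB(1) X_def by blast
  qed
  have aA: "A \<noteq> {}" using AB by simp
  then obtain a where a: "a \<in> A" by blast
  have kl2: "k < length Ms2" unfolding Ms2_def using lx by simp
  have a2: "a \<in> Ms2!k" unfolding Ms2_def using lx[symmetric] a by simp
  have t3: "take (Suc k) Ms2 = xs @ [A]" unfolding Ms2_def using lx by simp
  have "{j. (j,a)\<in>R'} = W k \<union> A" using uc[OF rm2' kl2 a2] unfolding t3 Wk by auto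
  then have iA: "setprob (\<phi> R') (W k \<union> A) \<ge> setprob (\<phi> R) (W k \<union> A)" using f2[of a] by simp
  have eWk: "setprob (\<phi> R) (W k) = setprob (\<phi> R') (W k)" using eqW kl by simp
  have rA: "setprob (\<phi> R') A \<ge> setprob (\<phi> R) A"
    using iA eWk setprob_union[OF djk, of "\<phi> R"] setprob_union[OF djk, of "\<phi> R'"] by simp
  have bk: "setprob (\<phi> R) (A \<union> B) = setprob (\<phi> R') (A \<union> B)" using blk[OF kl] AB(1) by simp
  have rB: "setprob (\<phi> R') B \<le> setprob (\<phi> R) B"
    using rA bk setprob_union[OF AB(2), of "\<phi> R"] setprob_union[OF AB(2), of "\<phi> R'"] by simp
  show ?thesis using blk rA rB by blast
qed


theorem theorem1:
  fixes \<phi> :: "('a::finite \<times> 'a) set \<Rightarrow> 'a \<Rightarrow> real"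
  assumes "mechanism \<phi>"
  shows "strategyproof \<phi> \<longleftrightarrow>
           sep_monotonic \<phi> \<and> sep_upper_invariant \<phi> \<and> sep_lower_invariant \<phi>"
proof
  assume spf: "strategyproof \<phi>"
  have c: "\<And>R R' Ms k A B. separation R R' Ms k A B \<Longrightarrow>
      (\<forall>i<length Ms. setprob (\<phi> R) (Ms!i) = setprob (\<phi> R') (Ms!i)) \<and>
      setprob (\<phi> R') A \<ge> setprob (\<phi> R) A \<and> setprob (\<phi> R') B \<le> setprob (\<phi> R) B"
    using sp_core[OF spf] by blast
  have "sep_responsive \<phi>" unfolding sep_responsive_def using c by blast
  moreover have "sep_direct \<phi>" unfolding sep_direct_def using c by blast
  moreover have "sep_upper_invariant \<phi>" unfolding sep_upper_invariant_def
  proof (intro allI impI)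
    fix R R' :: "('a \<times> 'a) set" and Ms :: "'a set list" and k :: nat and A B :: "'a set" and i :: nat
    assume s: "separation R R' Ms k A B" and "i < k"
    moreover have "k < length Ms" using s by (simp add: separation_def)
    ultimately have "i < length Ms" by simp
    then show "setprob (\<phi> R) (Ms ! i) = setprob (\<phi> R') (Ms ! i)" using c[OF s] by blast
  qed
  moreover have "sep_lower_invariant \<phi>" unfolding sep_lower_invariant_def using c by blast
  ultimately show "sep_monotonic \<phi> \<and> sep_upper_invariant \<phi> \<and> sep_lower_invariant \<phi>"
    by (simp add: sep_monotonic_def)
next
  assume h: "sep_monotonic \<phi> \<and> sep_upper_invariant \<phi> \<and> sep_lower_invariant \<phi>"
  interpret sax \<phi>
    using assms h by unfold_locales (simp_all add: sep_monotonic_def)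
  show "strategyproof \<phi>" by (rule sp)
qed


end
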